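(* Let $\mathcal{C}$ be a deflation-exact category and $\mathcal{A}$ an admissibly deflation-percolating subcategory. Consider a commutative diagram $$\begin{array}{ccccc} X&\rightarrowtail&Y&\twoheadrightarrow&Z\\ \downarrow{\scriptstyle f}&&\downarrow{\scriptstyle g}&&\|\\ X'&\rightarrowtail&Y'&\twoheadrightarrow&Z\end{array}$$ whose rows are conflations and whose right vertical map is the identity of $Z$. (1) If $f$ is an $\mathcal{A}^{-1}$-inflation, then $g$ is an $\mathcal{A}^{-1}$-inflation. (2) If $f$ is an $\mathcal{A}^{-1}$-deflation, then $g$ is an $\mathcal{A}^{-1}$-deflation.
   Context: A conflation category is an additive category with a class of kernel-cokernel pairs (closed under isomorphisms) called conflations; first map an inflation, second a deflation. A deflation-exact category is a conflation category satisfying: (R0) $1_0$ is a deflation; (R1) composites of deflations are deflations; (R2) pullbacks of deflations along arbitrary morphisms exist and are deflations. A non-empty full subcategory $\mathcal{A}$ is admissibly deflation-percolating if: (A1) for every conflation $A'\rightarrowtail A\twoheadrightarrow A''$, $A\in\mathcal{A}$ iff $A',A''\in\mathcal{A}$; (A2) every morphism $C\to A$ with $A\in\mathcal{A}$ factors as a deflation $C\twoheadrightarrow A'$ followed by an inflation $A'\rightarrowtail A$ with $A'\in\mathcal{A}$; (A3) if $a\colon C\rightarrowtail D$ is an inflation and $b\colon C\twoheadrightarrow A$ a deflation with $A\in\mathcal{A}$, the pushout of $a$ along $b$ exists and yields a deflation $D\twoheadrightarrow P$ and an inflation $A\rightarrowtail P$. An $\mathcal{A}^{-1}$-inflation is an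 inflation with cokernel in $\mathcal{A}$; an $\mathcal{A}^{-1}$-deflation is a deflation with kernel in $\mathcal{A}$. *)

theory Defs
  imports Main
begin

text \<open>An additive category is represented by a record: a set of objects, hom-sets,
composition (cmp g f = g after f), identities, and the abelian group structure on hom-sets.\<close>

record ('o, 'm) addcat =
  Ob   :: "'o set"
  Hom  :: "'o \<Rightarrow> 'o \<Rightarrow> 'm set"
  cmp  :: "'m \<Rightarrow> 'm \<Rightarrow> 'm"
  idm  :: "'o \<Rightarrow> 'm"
  plus :: "'m \<Rightarrow> 'm \<Rightarrow> 'm"
  zer  :: "'o \<Rightarrow> 'o \<Rightarrow> 'm"
  neg  :: "'m \<Rightarrow> 'm"

definition is_category :: "('o, 'm, 'e) addcat_scheme \<Rightarrow> bool" where
  "is_category C \<longleftrightarrow>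
     (\<forall>X Y. Hom C X Y \<noteq> {} \<longrightarrow> X \<in> Ob C \<and> Y \<in> Ob C) \<and>
     (\<forall>X \<in> Ob C. idm C X \<in> Hom C X X) \<and>
     (\<forall>X Y Z f g. f \<in> Hom C X Y \<longrightarrow> g \<in> Hom C Y Z \<longrightarrow> cmp C g f \<in> Hom C X Z) \<and>
     (\<forall>X Y f. f \<in> Hom C X Y \<longrightarrow> cmp C (idm C Y) f = f \<and> cmp C f (idm C X) = f) \<and>
     (\<forall>W X Y Z f g h. f \<in> Hom C W X \<longrightarrow> g \<in> Hom C X Y \<longrightarrow> h \<in> Hom C Y Z \<longrightarrow>
        cmp C h (cmp C g f) = cmp C (cmp C h g) f)"

definition is_preadditive :: "('o, 'm, 'e) addcat_scheme \<Rightarrow> bool" where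
  "is_preadditive C \<longleftrightarrow> is_category C \<and>
     (\<forall>X \<in> Ob C. \<forall>Y \<in> Ob C.
        zer C X Y \<in> Hom C X Y \<and>
        (\<forall>f \<in> Hom C X Y. neg C f \<in> Hom C X Y \<and> plus C f (zer C X Y) = f \<and>
                         plus C f (neg C f) = zer C X Y) \<and>
        (\<forall>f \<in> Hom C X Y. \<forall>g \<in> Hom C X Y. plus C f g \<in> Hom C X Y \<and> plus C f g = plus C g f \<and>
           (\<forall>h \<in> Hom C X Y. plus C (plus C f g) h = plus C f (plus C g h)))) \<and>
     (\<forall>X Y Z. \<forall>f \<in> Hom C X Y. \<forall>g \<in> Hom C X Y. \<forall>h \<in> Hom C Y Z.
        cmp C h (plus C f g) = plus C (cmp C h f) (cmp C h g)) \<and>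
     (\<forall>X Y Z. \<forall>f \<in> Hom C X Y. \<forall>g \<in> Hom C Y Z. \<forall>h \<in> Hom C Y Z.
        cmp C (plus C g h) f = plus C (cmp C g f) (cmp C h f))"

definition zero_object :: "('o, 'm, 'e) addcat_scheme \<Rightarrow> 'o \<Rightarrow> bool" where
  "zero_object C Z \<longleftrightarrow> Z \<in> Ob C \<and>
     (\<forall>X \<in> Ob C. Hom C Z X = {zer C Z X} \<and> Hom C X Z = {zer C X Z})"

definition is_additive :: "('o, 'm, 'e) addcat_scheme \<Rightarrow> bool" where
  "is_additive C \<longleftrightarrow> is_preadditive C \<and> (\<exists>Z. zero_object C Z) \<and>
     (\<forall>X \<in> Ob C. \<forall>Y \<in> Ob C. \<exists>P i1 i2 p1 p2. P \<in> Ob C \<and>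
        i1 \<in> Hom C X P \<and> i2 \<in> Hom C Y P \<and> p1 \<in> Hom C P X \<and> p2 \<in> Hom C P Y \<and>
        cmp C p1 i1 = idm C X \<and> cmp C p2 i2 = idm C Y \<and>
        cmp C p1 i2 = zer C Y X \<and> cmp C p2 i1 = zer C X Y \<and>
        plus C (cmp C i1 p1) (cmp C i2 p2) = idm C P)"

definition is_kernel :: "('o, 'm, 'e) addcat_scheme \<Rightarrow> 'o \<Rightarrow> 'm \<Rightarrow> 'o \<Rightarrow> 'm \<Rightarrow> 'o \<Rightarrow> bool" where
  "is_kernel C K k A d B \<longleftrightarrow> k \<in> Hom C K A \<and> d \<in> Hom C A B \<and> cmp C d k = zer C K B \<and>
     (\<forall>T. \<forall>t \<in> Hom C T A. cmp C d t = zer C T B \<longrightarrow> (\<exists>!u. u \<in> Hom C T K \<and> cmp C k u = t))"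

definition is_cokernel :: "('o, 'm, 'e) addcat_scheme \<Rightarrow> 'o \<Rightarrow> 'm \<Rightarrow> 'o \<Rightarrow> 'm \<Rightarrow> 'o \<Rightarrow> bool" where
  "is_cokernel C A k B d Q \<longleftrightarrow> k \<in> Hom C A B \<and> d \<in> Hom C B Q \<and> cmp C d k = zer C A Q \<and>
     (\<forall>T. \<forall>t \<in> Hom C B T. cmp C t k = zer C A T \<longrightarrow> (\<exists>!u. u \<in> Hom C Q T \<and> cmp C u d = t))"

definition is_iso :: "('o, 'm, 'e) addcat_scheme \<Rightarrow> 'o \<Rightarrow> 'o \<Rightarrow> 'm \<Rightarrow> bool" where
  "is_iso C X Y f \<longleftrightarrow> f \<in> Hom C X Y \<and>
     (\<exists>g \<in> Hom C Y X. cmp C g f = idm C X \<and> cmp C f g = idm C Y)"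

text \<open>A class of conflations is a predicate conf A' i A p A'' (i : A' \<rightarrowtail> A, p : A \<twoheadrightarrow> A'').\<close>
type_synonym ('o, 'm) confl = "'o \<Rightarrow> 'm \<Rightarrow> 'o \<Rightarrow> 'm \<Rightarrow> 'o \<Rightarrow> bool"

definition conflation_category :: "('o, 'm, 'e) addcat_scheme \<Rightarrow> ('o, 'm) confl \<Rightarrow> bool" where
  "conflation_category C conf \<longleftrightarrow> is_additive C \<and>
     (\<forall>A' i A p A''. conf A' i A p A'' \<longrightarrow>
        is_kernel C A' i A p A'' \<and> is_cokernel C A' i A p A'') \<and>
     (\<forall>A' i A p A'' B' j B q B'' a b c.
        conf A' i A p A'' \<and> j \<in> Hom C B' B \<and> q \<in> Hom C B B'' \<and>
        is_iso C A' B' a \<and> is_iso C A B b \<and> is_iso C A'' B'' c \<and>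
        cmp C j a = cmp C b i \<and> cmp C q b = cmp C c p \<longrightarrow> conf B' j B q B'')"

definition inflation :: "('o, 'm) confl \<Rightarrow> 'o \<Rightarrow> 'm \<Rightarrow> 'o \<Rightarrow> bool" where
  "inflation conf A' i A \<longleftrightarrow> (\<exists>p A''. conf A' i A p A'')"

definition deflation :: "('o, 'm) confl \<Rightarrow> 'o \<Rightarrow> 'm \<Rightarrow> 'o \<Rightarrow> bool" where
  "deflation conf A p A'' \<longleftrightarrow> (\<exists>A' i. conf A' i A p A'')"

definition is_pullback :: "('o, 'm, 'e) addcat_scheme \<Rightarrow> 'o \<Rightarrow> 'm \<Rightarrow> 'm \<Rightarrow> 'o \<Rightarrow> 'm \<Rightarrow> 'o \<Rightarrow> 'm \<Rightarrow> 'o \<Rightarrow> bool" where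
  "is_pullback C P t' p' B p E t D \<longleftrightarrow>
     P \<in> Ob C \<and> t' \<in> Hom C P B \<and> p' \<in> Hom C P E \<and> p \<in> Hom C B D \<and> t \<in> Hom C E D \<and>
     cmp C p t' = cmp C t p' \<and>
     (\<forall>T. \<forall>u \<in> Hom C T B. \<forall>v \<in> Hom C T E. cmp C p u = cmp C t v \<longrightarrow>
        (\<exists>!w. w \<in> Hom C T P \<and> cmp C t' w = u \<and> cmp C p' w = v))"

definition is_pushout :: "('o, 'm, 'e) addcat_scheme \<Rightarrow> 'o \<Rightarrow> 'm \<Rightarrow> 'o \<Rightarrow> 'm \<Rightarrow> 'o \<Rightarrow> 'm \<Rightarrow> 'm \<Rightarrow> 'o \<Rightarrow> bool" where
  "is_pushout C X a D b A b' a' P \<longleftrightarrow>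
     P \<in> Ob C \<and> a \<in> Hom C X D \<and> b \<in> Hom C X A \<and> b' \<in> Hom C D P \<and> a' \<in> Hom C A P \<and>
     cmp C b' a = cmp C a' b \<and>
     (\<forall>T. \<forall>u \<in> Hom C D T. \<forall>v \<in> Hom C A T. cmp C u a = cmp C v b \<longrightarrow>
        (\<exists>!w. w \<in> Hom C P T \<and> cmp C w b' = u \<and> cmp C w a' = v))"

definition deflation_exact :: "('o, 'm, 'e) addcat_scheme \<Rightarrow> ('o, 'm) confl \<Rightarrow> bool" where
  "deflation_exact C conf \<longleftrightarrow> conflation_category C conf \<and>
     (\<forall>Z. zero_object C Z \<longrightarrow> deflation conf Z (idm C Z) Z) \<and>
     (\<forall>A B D p q. deflation conf A p B \<and> deflation conf B q D \<longrightarrow> deflation conf A (cmp C q p) D) \<and>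
     (\<forall>B p D E t. deflation conf B p D \<and> t \<in> Hom C E D \<longrightarrow>
        (\<exists>P t' p'. is_pullback C P t' p' B p E t D \<and> deflation conf P p' E))"

definition admissibly_deflation_percolating ::
  "('o, 'm, 'e) addcat_scheme \<Rightarrow> ('o, 'm) confl \<Rightarrow> 'o set \<Rightarrow> bool" where
  "admissibly_deflation_percolating C conf \<A> \<longleftrightarrow> \<A> \<noteq> {} \<and> \<A> \<subseteq> Ob C \<and>
     (\<forall>A' i A p A''. conf A' i A p A'' \<longrightarrow> (A \<in> \<A> \<longleftrightarrow> A' \<in> \<A> \<and> A'' \<in> \<A>)) \<and>
     (\<forall>X A c. A \<in> \<A> \<and> c \<in> Hom C X A \<longrightarrow>
        (\<exists>A' d i. A' \<in> \<A> \<and> deflation conf X d A' \<and> inflation conf A' i A \<and> c = cmp C i d)) \<and>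
     (\<forall>X D A a b. inflation conf X a D \<and> deflation conf X b A \<and> A \<in> \<A> \<longrightarrow>
        (\<exists>P b' a'. is_pushout C X a D b A b' a' P \<and> deflation conf D b' P \<and> inflation conf A a' P))"

definition A_inflation :: "('o, 'm) confl \<Rightarrow> 'o set \<Rightarrow> 'o \<Rightarrow> 'm \<Rightarrow> 'o \<Rightarrow> bool" where
  "A_inflation conf \<A> X f Y \<longleftrightarrow> (\<exists>p Q. conf X f Y p Q \<and> Q \<in> \<A>)"

definition A_deflation :: "('o, 'm) confl \<Rightarrow> 'o set \<Rightarrow> 'o \<Rightarrow> 'm \<Rightarrow> 'o \<Rightarrow> bool" where
  "A_deflation conf \<A> X f Y \<longleftrightarrow> (\<exists>K k. conf K k X f Y \<and> K \<in> \<A>)"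

end

theory Submission
  imports Defs
begin


locale dex =
  fixes C :: "('o, 'm, 'e) addcat_scheme" and conf :: "('o, 'm) confl"
  assumes dex: "deflation_exact C conf"
begin

abbreviation cp (infixr "\<odot>" 70) where "g \<odot> f \<equiv> cmp C g f"
abbreviation pl (infixl "\<boxplus>" 65) where "f \<boxplus> g \<equiv> plus C f g"
abbreviation ng where "ng f \<equiv> neg C f"
abbreviation zr where "zr X Y \<equiv> zer C X Y"
abbreviation ide where "ide X \<equiv> idm C X"
abbreviation H where "H X Y \<equiv> Hom C X Y"

lemma cc: "conflation_category C conf" using dex by (simp add: deflation_exact_def)
lemma add: "is_additive C" using cc by (simp add: conflation_category_def)
lemma pre: "is_preadditive C" using add by (simp add: is_additive_def)
lemma cat: "is_category C" using pre by (simp add: is_preadditive_def)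

lemma catD: "(\<forall>X Y. H X Y \<noteq> {} \<longrightarrow> X \<in> Ob C \<and> Y \<in> Ob C) \<and>
     (\<forall>X \<in> Ob C. ide X \<in> H X X) \<and>
     (\<forall>X Y Z f g. f \<in> H X Y \<longrightarrow> g \<in> H Y Z \<longrightarrow> g \<odot> f \<in> H X Z) \<and>
     (\<forall>X Y f. f \<in> H X Y \<longrightarrow> ide Y \<odot> f = f \<and> f \<odot> ide X = f) \<and>
     (\<forall>W X Y Z f g h. f \<in> H W X \<longrightarrow> g \<in> H X Y \<longrightarrow> h \<in> H Y Z \<longrightarrow>
        h \<odot> (g \<odot> f) = (h \<odot> g) \<odot> f)"
  using cat unfolding is_category_def .

lemma ob: assumes "f \<in> H X Y" shows "X \<in> Ob C \<and> Y \<in> Ob C"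
proof -
  have "H X Y \<noteq> {}" using assms by blast
  then show ?thesis using catD by blast
qed
lemma obL: "f \<in> H X Y \<Longrightarrow> X \<in> Ob C" using ob by blast
lemma obR: "f \<in> H X Y \<Longrightarrow> Y \<in> Ob C" using ob by blast
lemma hc: "f \<in> H X Y \<Longrightarrow> g \<in> H Y Z \<Longrightarrow> g \<odot> f \<in> H X Z"
  using catD by blast
lemma hid: "X \<in> Ob C \<Longrightarrow> ide X \<in> H X X"
  using catD by blast
lemma idl: "f \<in> H X Y \<Longrightarrow> ide Y \<odot> f = f"
  using catD by blast
lemma idr: "f \<in> H X Y \<Longrightarrow> f \<odot> ide X = f"
  using catD by blast
lemma assoc: "f \<in> H W X \<Longrightarrow> g \<in> H X Y \<Longrightarrow> h \<in> H Y Z \<Longrightarrow> h \<odot> (g \<odot> f) = (h \<odot> g) \<odot> f"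
  using catD by blast

lemma preD: "(\<forall>X \<in> Ob C. \<forall>Y \<in> Ob C.
        zr X Y \<in> H X Y \<and>
        (\<forall>f \<in> H X Y. ng f \<in> H X Y \<and> f \<boxplus> zr X Y = f \<and> f \<boxplus> ng f = zr X Y) \<and>
        (\<forall>f \<in> H X Y. \<forall>g \<in> H X Y. f \<boxplus> g \<in> H X Y \<and> f \<boxplus> g = g \<boxplus> f \<and>
           (\<forall>h \<in> H X Y. f \<boxplus> g \<boxplus> h = f \<boxplus> (g \<boxplus> h)))) \<and>
     (\<forall>X Y Z. \<forall>f \<in> H X Y. \<forall>g \<in> H X Y. \<forall>h \<in> H Y Z.
        h \<odot> (f \<boxplus> g) = h \<odot> f \<boxplus> h \<odot> g) \<and>
     (\<forall>X Y Z. \<forall>f \<in> H X Y. \<forall>g \<in> H Y Z. \<forall>h \<in> H Y Z.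
        (g \<boxplus> h) \<odot> f = g \<odot> f \<boxplus> h \<odot> f)"
  using pre unfolding is_preadditive_def by (elim conjE) (intro conjI)

lemma grp: assumes "X \<in> Ob C" "Y \<in> Ob C" shows "zr X Y \<in> H X Y \<and>
        (\<forall>f \<in> H X Y. ng f \<in> H X Y \<and> f \<boxplus> zr X Y = f \<and> f \<boxplus> ng f = zr X Y) \<and>
        (\<forall>f \<in> H X Y. \<forall>g \<in> H X Y. f \<boxplus> g \<in> H X Y \<and> f \<boxplus> g = g \<boxplus> f \<and>
           (\<forall>h \<in> H X Y. f \<boxplus> g \<boxplus> h = f \<boxplus> (g \<boxplus> h)))"
  using preD assms by blast

lemma hz: "X \<in> Ob C \<Longrightarrow> Y \<in> Ob C \<Longrightarrow> zr X Y \<in> H X Y"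
  using grp by blast
lemma hz': "f \<in> H X A \<Longrightarrow> g \<in> H B Y \<Longrightarrow> zr X Y \<in> H X Y"
  using hz obL obR by blast
lemma hn: "f \<in> H X Y \<Longrightarrow> ng f \<in> H X Y"
  using grp[OF obL obR] by blast
lemma hp: "f \<in> H X Y \<Longrightarrow> g \<in> H X Y \<Longrightarrow> f \<boxplus> g \<in> H X Y"
  using grp[OF obL obR] by blast
lemma a0: "f \<in> H X Y \<Longrightarrow> f \<boxplus> zr X Y = f"
  using grp[OF obL obR] by blast
lemma an: "f \<in> H X Y \<Longrightarrow> f \<boxplus> ng f = zr X Y"
  using grp[OF obL obR] by blast
lemma acomm: "f \<in> H X Y \<Longrightarrow> g \<in> H X Y \<Longrightarrow> f \<boxplus> g = g \<boxplus> f"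
  using grp[OF obL obR] by blast
lemma aassoc: "f \<in> H X Y \<Longrightarrow> g \<in> H X Y \<Longrightarrow> h \<in> H X Y \<Longrightarrow> f \<boxplus> g \<boxplus> h = f \<boxplus> (g \<boxplus> h)"
  using grp[OF obL obR] by blast
lemma dl: "f \<in> H X Y \<Longrightarrow> g \<in> H X Y \<Longrightarrow> h \<in> H Y Z \<Longrightarrow> h \<odot> (f \<boxplus> g) = h \<odot> f \<boxplus> h \<odot> g"
  using preD by blast
lemma dr: "f \<in> H X Y \<Longrightarrow> g \<in> H Y Z \<Longrightarrow> h \<in> H Y Z \<Longrightarrow> (g \<boxplus> h) \<odot> f = g \<odot> f \<boxplus> h \<odot> f"
  using preD by blast

lemma a0l: assumes "f \<in> H X Y" shows "zr X Y \<boxplus> f = f"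
proof -
  have z: "zr X Y \<in> H X Y" using hz[OF obL[OF assms] obR[OF assms]] .
  show ?thesis using acomm[OF z assms] a0[OF assms] by simp
qed

lemma cancel: assumes "a \<in> H X Y" "b \<in> H X Y" "c \<in> H X Y" "a \<boxplus> c = b \<boxplus> c" shows "a = b"
proof -
  have n: "ng c \<in> H X Y" using hn assms by blast
  have "a = a \<boxplus> c \<boxplus> ng c" using aassoc[OF assms(1,3) n] an[OF assms(3)] a0[OF assms(1)] by simp
  also have "\<dots> = b \<boxplus> c \<boxplus> ng c" using assms by simp
  also have "\<dots> = b" using aassoc[OF assms(2,3) n] an[OF assms(3)] a0[OF assms(2)] by simp
  finally show ?thesis .
qed

lemma idem0: assumes "a \<in> H X Y" "a \<boxplus> a = a" shows "a = zr X Y"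
  using cancel[OF assms(1) hz'[OF assms(1) assms(1)] assms(1)] assms(2) a0l[OF assms(1)] by simp

lemma c0: assumes "h \<in> H Y Z" "X \<in> Ob C" shows "h \<odot> zr X Y = zr X Z"
proof -
  have z: "zr X Y \<in> H X Y" using hz[OF assms(2) obL[OF assms(1)]] .
  have "h \<odot> zr X Y = h \<odot> (zr X Y \<boxplus> zr X Y)" using a0[OF z] by simp
  also have "\<dots> = h \<odot> zr X Y \<boxplus> h \<odot> zr X Y" using dl[OF z z assms(1)] .
  finally have "h \<odot> zr X Y \<boxplus> h \<odot> zr X Y = h \<odot> zr X Y" by (rule sym)
  then show ?thesis using idem0[OF hc[OF z assms(1)]] by blast
qed

lemma z0c: assumes "h \<in> H X Y" "Z \<in> Ob C" shows "zr Y Z \<odot> h = zr X Z"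
proof -
  have z: "zr Y Z \<in> H Y Z" using hz[OF obR[OF assms(1)] assms(2)] .
  have "zr Y Z \<odot> h = (zr Y Z \<boxplus> zr Y Z) \<odot> h" using a0[OF z] by simp
  also have "\<dots> = zr Y Z \<odot> h \<boxplus> zr Y Z \<odot> h" using dr[OF assms(1) z z] .
  finally have "zr Y Z \<odot> h \<boxplus> zr Y Z \<odot> h = zr Y Z \<odot> h" by (rule sym)
  then show ?thesis using idem0[OF hc[OF assms(1) z]] by blast
qed

lemma c0': "h \<in> H Y Z \<Longrightarrow> f \<in> H X W \<Longrightarrow> h \<odot> zr X Y = zr X Z" using c0 obL by blast
lemma z0c': "h \<in> H X Y \<Longrightarrow> f \<in> H W Z \<Longrightarrow> zr Y Z \<odot> h = zr X Z" using z0c obR by blast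

lemma negu: assumes "a \<in> H X Y" "b \<in> H X Y" "a \<boxplus> b = zr X Y" shows "b = ng a"
proof -
  have n: "ng a \<in> H X Y" using hn assms by blast
  have "b \<boxplus> a = ng a \<boxplus> a" using acomm[OF assms(1,2)] acomm[OF assms(1) n] an[OF assms(1)] assms(3) by simp
  then show ?thesis using cancel[OF assms(2) n assms(1)] by blast
qed

lemma cn: assumes "f \<in> H X Y" "h \<in> H Y Z" shows "h \<odot> ng f = ng (h \<odot> f)"
proof -
  have 1: "h \<odot> f \<boxplus> h \<odot> ng f = h \<odot> (f \<boxplus> ng f)" using dl[OF assms(1) hn[OF assms(1)] assms(2)] by simp
  have 2: "h \<odot> (f \<boxplus> ng f) = zr X Z" using an[OF assms(1)] c0[OF assms(2) obL[OF assms(1)]] by simp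
  show ?thesis using negu[OF hc[OF assms] hc[OF hn[OF assms(1)] assms(2)]] 1 2 by simp
qed

lemma nc: assumes "f \<in> H X Y" "h \<in> H Y Z" shows "ng h \<odot> f = ng (h \<odot> f)"
proof -
  have 1: "h \<odot> f \<boxplus> ng h \<odot> f = (h \<boxplus> ng h) \<odot> f" using dr[OF assms(1) assms(2) hn[OF assms(2)]] by simp
  have 2: "(h \<boxplus> ng h) \<odot> f = zr X Z" using an[OF assms(2)] z0c[OF assms(1) obR[OF assms(2)]] by simp
  show ?thesis using negu[OF hc[OF assms] hc[OF assms(1) hn[OF assms(2)]]] 1 2 by simp
qed

lemma sub_eq: assumes "a \<in> H X Y" "b \<in> H X Y" "c \<in> H X Y" "a \<boxplus> b = c" shows "a = c \<boxplus> ng b"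
proof -
  have n: "ng b \<in> H X Y" using hn assms by blast
  show ?thesis using aassoc[OF assms(1,2) n] an[OF assms(2)] a0[OF assms(1)] assms(4) by simp
qed

lemma sub_zero: assumes "a \<in> H X Y" "b \<in> H X Y" "a \<boxplus> ng b = zr X Y" shows "a = b"
proof -
  have n: "ng b \<in> H X Y" using hn assms by blast
  have "a \<boxplus> ng b = b \<boxplus> ng b" using an[OF assms(2)] assms(3) by simp
  then show ?thesis using cancel[OF assms(1,2) n] by blast
qed

end

context dex begin

lemma confKC: "conf A' i A p A'' \<Longrightarrow> is_kernel C A' i A p A'' \<and> is_cokernel C A' i A p A''"
  using cc unfolding conflation_category_def by blast
lemma confK: "conf A' i A p A'' \<Longrightarrow> is_kernel C A' i A p A''" using confKC by blast
lemma confC: "conf A' i A p A'' \<Longrightarrow> is_cokernel C A' i A p A''" using confKC by blast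

lemma kerH: "is_kernel C K k A d B \<Longrightarrow> k \<in> H K A \<and> d \<in> H A B \<and> d \<odot> k = zr K B"
  unfolding is_kernel_def by blast
lemma cokH: "is_cokernel C A k B d Q \<Longrightarrow> k \<in> H A B \<and> d \<in> H B Q \<and> d \<odot> k = zr A Q"
  unfolding is_cokernel_def by blast
lemma confH: "conf A' i A p A'' \<Longrightarrow> i \<in> H A' A \<and> p \<in> H A A'' \<and> p \<odot> i = zr A' A''"
  using confK kerH by blast

lemma ex1_eq: "\<exists>!x. P x \<Longrightarrow> P a \<Longrightarrow> P b \<Longrightarrow> a = b" by blast

lemma kerU: "is_kernel C K k A d B \<Longrightarrow> t \<in> H T A \<Longrightarrow> d \<odot> t = zr T B \<Longrightarrow> \<exists>!u. u \<in> H T K \<and> k \<odot> u = t"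
  unfolding is_kernel_def by blast
lemma cokU: "is_cokernel C A k B d Q \<Longrightarrow> t \<in> H B T \<Longrightarrow> t \<odot> k = zr A T \<Longrightarrow> \<exists>!u. u \<in> H Q T \<and> u \<odot> d = t"
  unfolding is_cokernel_def by blast

lemma ker_lift: "is_kernel C K k A d B \<Longrightarrow> t \<in> H T A \<Longrightarrow> d \<odot> t = zr T B \<Longrightarrow> \<exists>u\<in>H T K. k \<odot> u = t"
  unfolding is_kernel_def by blast

lemma ker_mono: assumes "is_kernel C K k A d B" "u1 \<in> H T K" "u2 \<in> H T K" "k \<odot> u1 = k \<odot> u2"
  shows "u1 = u2"
proof -
  have h: "k \<in> H K A" "d \<in> H A B" "d \<odot> k = zr K B" using kerH[OF assms(1)] by auto
  have "d \<odot> (k \<odot> u1) = (d \<odot> k) \<odot> u1" using assoc[OF assms(2) h(1) h(2)] .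
  also have "\<dots> = zr T B" using h(3) z0c'[OF assms(2) h(2)] by simp
  finally have 1: "d \<odot> (k \<odot> u1) = zr T B" .
  have 2: "k \<odot> u1 \<in> H T A" using hc[OF assms(2) h(1)] .
  show ?thesis by (rule ex1_eq[OF kerU[OF assms(1) 2 1]]) (use assms in auto)
qed

lemma cok_desc: "is_cokernel C A k B d Q \<Longrightarrow> t \<in> H B T \<Longrightarrow> t \<odot> k = zr A T \<Longrightarrow> \<exists>u\<in>H Q T. u \<odot> d = t"
  unfolding is_cokernel_def by blast

lemma cok_epi: assumes "is_cokernel C A k B d Q" "u1 \<in> H Q T" "u2 \<in> H Q T" "u1 \<odot> d = u2 \<odot> d"
  shows "u1 = u2"
proof -
  have h: "k \<in> H A B" "d \<in> H B Q" "d \<odot> k = zr A Q" using cokH[OF assms(1)] by auto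
  have "(u1 \<odot> d) \<odot> k = u1 \<odot> (d \<odot> k)" using assoc[OF h(1) h(2) assms(2)] by simp
  also have "\<dots> = zr A T" using h(3) c0'[OF assms(2) h(1)] by simp
  finally have 1: "(u1 \<odot> d) \<odot> k = zr A T" .
  have 2: "u1 \<odot> d \<in> H B T" using hc[OF h(2) assms(2)] .
  show ?thesis by (rule ex1_eq[OF cokU[OF assms(1) 2 1]]) (use assms in auto)
qed

lemma conf_iso: "conf A' i A p A'' \<Longrightarrow> j \<in> H B' B \<Longrightarrow> q \<in> H B B'' \<Longrightarrow>
   is_iso C A' B' a \<Longrightarrow> is_iso C A B b \<Longrightarrow> is_iso C A'' B'' c \<Longrightarrow>
   j \<odot> a = b \<odot> i \<Longrightarrow> q \<odot> b = c \<odot> p \<Longrightarrow> conf B' j B q B''"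
  by (rule cc[unfolded conflation_category_def, THEN conjunct2, THEN conjunct2, rule_format]) (intro conjI; assumption)

lemma iso_intro: "f \<in> H X Y \<Longrightarrow> g \<in> H Y X \<Longrightarrow> g \<odot> f = ide X \<Longrightarrow> f \<odot> g = ide Y \<Longrightarrow> is_iso C X Y f"
  unfolding is_iso_def by blast
lemma iso_id: assumes "X \<in> Ob C" shows "is_iso C X X (ide X)"
proof -
  have h: "ide X \<in> H X X" using hid[OF assms] .
  show ?thesis using iso_intro[OF h h] idl[OF h] by simp
qed

lemma ker_transport: assumes "conf A' i A p A''" "is_kernel C K k A p A''"
  shows "conf K k A p A''"
proof -
  have ki: "is_kernel C A' i A p A''" using confK assms by blast
  have h: "i \<in> H A' A" "p \<in> H A A''" "p \<odot> i = zr A' A''" using kerH[OF ki] by auto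
  have h2: "k \<in> H K A" "p \<odot> k = zr K A''" using kerH[OF assms(2)] by auto
  obtain v where v: "v \<in> H A' K" "k \<odot> v = i" using ker_lift[OF assms(2) h(1) h(3)] by blast
  obtain u where u: "u \<in> H K A'" "i \<odot> u = k" using ker_lift[OF ki h2(1) h2(2)] by blast
  have "i \<odot> (u \<odot> v) = (i \<odot> u) \<odot> v" using assoc[OF v(1) u(1) h(1)] .
  also have "\<dots> = i \<odot> ide A'" using u v idr[OF h(1)] by simp
  finally have uv: "u \<odot> v = ide A'" using ker_mono[OF ki hc[OF v(1) u(1)] hid[OF obL[OF h(1)]]] by blast
  have "k \<odot> (v \<odot> u) = (k \<odot> v) \<odot> u" using assoc[OF u(1) v(1) h2(1)] .
  also have "\<dots> = k \<odot> ide K" using u v idr[OF h2(1)] by simp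
  finally have vu: "v \<odot> u = ide K" using ker_mono[OF assms(2) hc[OF u(1) v(1)] hid[OF obL[OF h2(1)]]] by blast
  have 1: "is_iso C A' K v" using iso_intro[OF v(1) u(1) uv vu] .
  have 2: "is_iso C A A (ide A)" using iso_id[OF obR[OF h(1)]] .
  have 3: "is_iso C A'' A'' (ide A'')" using iso_id[OF obR[OF h(2)]] .
  show ?thesis using conf_iso[OF assms(1) h2(1) h(2) 1 2 3] v idl[OF h(1)] idr[OF h(2)] idl[OF h(2)] by simp
qed

lemma cok_transport: assumes "conf A' i A p A''" "is_cokernel C A' i A q Q"
  shows "conf A' i A q Q"
proof -
  have ki: "is_cokernel C A' i A p A''" using confC assms by blast
  have h: "i \<in> H A' A" "p \<in> H A A''" "p \<odot> i = zr A' A''" using cokH[OF ki] by auto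
  have h2: "q \<in> H A Q" "q \<odot> i = zr A' Q" using cokH[OF assms(2)] by auto
  obtain v where v: "v \<in> H Q A''" "v \<odot> q = p" using cok_desc[OF assms(2) h(2) h(3)] by blast
  obtain u where u: "u \<in> H A'' Q" "u \<odot> p = q" using cok_desc[OF ki h2(1) h2(2)] by blast
  have "(v \<odot> u) \<odot> p = v \<odot> (u \<odot> p)" using assoc[OF h(2) u(1) v(1)] by simp
  also have "\<dots> = ide A'' \<odot> p" using u v idl[OF h(2)] by simp
  finally have uv: "v \<odot> u = ide A''" using cok_epi[OF ki hc[OF u(1) v(1)] hid[OF obR[OF h(2)]]] by blast
  have "(u \<odot> v) \<odot> q = u \<odot> (v \<odot> q)" using assoc[OF h2(1) v(1) u(1)] by simp
  also have "\<dots> = ide Q \<odot> q" using u v idl[OF h2(1)] by simp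
  finally have vu: "u \<odot> v = ide Q" using cok_epi[OF assms(2) hc[OF v(1) u(1)] hid[OF obR[OF h2(1)]]] by blast
  have 1: "is_iso C A'' Q u" using iso_intro[OF u(1) v(1) uv vu] .
  have 2: "is_iso C A A (ide A)" using iso_id[OF obR[OF h(1)]] .
  have 3: "is_iso C A' A' (ide A')" using iso_id[OF obL[OF h(1)]] .
  show ?thesis using conf_iso[OF assms(1) h(1) h2(1) 3 2 1] u idl[OF h(1)] idr[OF h(1)] idr[OF h2(1)] by simp
qed

lemma pbH: "is_pullback C P t' p' B p E t D \<Longrightarrow> P \<in> Ob C \<and> t' \<in> H P B \<and> p' \<in> H P E \<and> p \<in> H B D \<and> t \<in> H E D \<and> p \<odot> t' = t \<odot> p'"
  unfolding is_pullback_def by blast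
lemma pb_lift: "is_pullback C P t' p' B p E t D \<Longrightarrow> u \<in> H T B \<Longrightarrow> v \<in> H T E \<Longrightarrow> p \<odot> u = t \<odot> v \<Longrightarrow>
   \<exists>w\<in>H T P. t' \<odot> w = u \<and> p' \<odot> w = v"
  unfolding is_pullback_def by blast
lemma pb_uniq: assumes "is_pullback C P t' p' B p E t D" "w1 \<in> H T P" "w2 \<in> H T P"
   "t' \<odot> w1 = t' \<odot> w2" "p' \<odot> w1 = p' \<odot> w2" shows "w1 = w2"
proof -
  have h: "t' \<in> H P B" "p' \<in> H P E" "p \<odot> t' = t \<odot> p'" "p \<in> H B D" "t \<in> H E D" using pbH[OF assms(1)] by auto
  have "p \<odot> (t' \<odot> w1) = (p \<odot> t') \<odot> w1" using assoc[OF assms(2) h(1) h(4)] .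
  also have "\<dots> = t \<odot> (p' \<odot> w1)" using h(3) assoc[OF assms(2) h(2) h(5)] by simp
  finally have 1: "p \<odot> (t' \<odot> w1) = t \<odot> (p' \<odot> w1)" .
  have 2: "t' \<odot> w1 \<in> H T B" "p' \<odot> w1 \<in> H T E" using hc[OF assms(2) h(1)] hc[OF assms(2) h(2)] by auto
  have "\<exists>!w. w \<in> H T P \<and> t' \<odot> w = t' \<odot> w1 \<and> p' \<odot> w = p' \<odot> w1"
    using assms(1) 1 2 unfolding is_pullback_def by blast
  then show ?thesis by (rule ex1_eq) (use assms in auto)
qed

lemma pb_transport: assumes "is_pullback C P1 t1 p1 B p E t D" "is_pullback C P2 t2 p2 B p E t D"
  "conf K k P1 p1 E" shows "\<exists>K' k'. conf K' k' P2 p2 E"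
proof -
  have h1: "P1 \<in> Ob C" "t1 \<in> H P1 B" "p1 \<in> H P1 E" "p \<in> H B D" "t \<in> H E D" "p \<odot> t1 = t \<odot> p1"
    using pbH[OF assms(1)] by auto
  have h2: "P2 \<in> Ob C" "t2 \<in> H P2 B" "p2 \<in> H P2 E" "p \<odot> t2 = t \<odot> p2"
    using pbH[OF assms(2)] by auto
  obtain \<phi> where ph: "\<phi> \<in> H P2 P1" "t1 \<odot> \<phi> = t2" "p1 \<odot> \<phi> = p2" using pb_lift[OF assms(1) h2(2,3,4)] by blast
  obtain \<psi> where ps: "\<psi> \<in> H P1 P2" "t2 \<odot> \<psi> = t1" "p2 \<odot> \<psi> = p1" using pb_lift[OF assms(2) h1(2,3,6)] by blast
  have "t1 \<odot> (\<phi> \<odot> \<psi>) = t1 \<odot> ide P1" using assoc[OF ps(1) ph(1) h1(2)] ph ps idr[OF h1(2)] by simp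
  moreover have "p1 \<odot> (\<phi> \<odot> \<psi>) = p1 \<odot> ide P1" using assoc[OF ps(1) ph(1) h1(3)] ph ps idr[OF h1(3)] by simp
  ultimately have a: "\<phi> \<odot> \<psi> = ide P1" using pb_uniq[OF assms(1) hc[OF ps(1) ph(1)] hid[OF h1(1)]] by blast
  have "t2 \<odot> (\<psi> \<odot> \<phi>) = t2 \<odot> ide P2" using assoc[OF ph(1) ps(1) h2(2)] ph ps idr[OF h2(2)] by simp
  moreover have "p2 \<odot> (\<psi> \<odot> \<phi>) = p2 \<odot> ide P2" using assoc[OF ph(1) ps(1) h2(3)] ph ps idr[OF h2(3)] by simp
  ultimately have b: "\<psi> \<odot> \<phi> = ide P2" using pb_uniq[OF assms(2) hc[OF ph(1) ps(1)] hid[OF h2(1)]] by blast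
  have 1: "is_iso C P1 P2 \<psi>" using iso_intro[OF ps(1) ph(1) a b] .
  have kk: "k \<in> H K P1" using confH[OF assms(3)] by blast
  have 2: "is_iso C K K (ide K)" using iso_id[OF obL[OF kk]] .
  have 3: "is_iso C E E (ide E)" using iso_id[OF obR[OF h1(3)]] .
  have "conf K (\<psi> \<odot> k) P2 p2 E"
    using conf_iso[OF assms(3) hc[OF kk ps(1)] h2(3) 2 1 3] idr[OF hc[OF kk ps(1)]] ps(3) idl[OF h1(3)] by simp
  then show ?thesis by blast
qed

lemma R1: "deflation conf A p B \<Longrightarrow> deflation conf B q D \<Longrightarrow> deflation conf A (q \<odot> p) D"
  using dex unfolding deflation_exact_def by blast
lemma R2: "deflation conf B p D \<Longrightarrow> t \<in> H E D \<Longrightarrow>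
   \<exists>P t' p'. is_pullback C P t' p' B p E t D \<and> deflation conf P p' E"
  using dex unfolding deflation_exact_def by blast

end

context dex begin

lemma add_sub: assumes "a \<in> H X Y" "b \<in> H X Y" "c \<in> H X Y" "a = c \<boxplus> ng b" shows "c = a \<boxplus> b"
proof -
  have n: "ng b \<in> H X Y" using hn[OF assms(2)] .
  have "a \<boxplus> b = c \<boxplus> (ng b \<boxplus> b)" using aassoc[OF assms(3) n assms(2)] assms(4) by simp
  also have "ng b \<boxplus> b = zr X Y" using acomm[OF n assms(2)] an[OF assms(2)] by simp
  finally show ?thesis using a0[OF assms(3)] by simp
qed

lemma common:
  assumes c1: "conf X i Y p Z" and c2: "conf X' i' Y' p' Z"
    and fh: "f \<in> H X X'" and gh: "g \<in> H Y Y'"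
    and sq: "g \<odot> i = i' \<odot> f" and tri0: "p' \<odot> g = ide Z \<odot> p"
  shows "\<exists>P \<pi>1 \<pi>2 \<beta> w w2. is_pullback C P \<pi>1 \<pi>2 Y p Y' p' Z \<and> deflation conf P \<pi>2 Y' \<and>
     \<beta> \<in> H P X' \<and> \<pi>2 = i' \<odot> \<beta> \<boxplus> g \<odot> \<pi>1 \<and>
     w \<in> H Y P \<and> \<pi>1 \<odot> w = ide Y \<and> \<pi>2 \<odot> w = g \<and> \<beta> \<odot> w = zr Y X' \<and>
     w2 \<in> H X' P \<and> \<pi>1 \<odot> w2 = zr X' Y \<and> \<pi>2 \<odot> w2 = i' \<and> \<beta> \<odot> w2 = ide X'"
proof -
  have ih: "i \<in> H X Y" "p \<in> H Y Z" "p \<odot> i = zr X Z" using confH[OF c1] by auto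
  have ih': "i' \<in> H X' Y'" "p' \<in> H Y' Z" "p' \<odot> i' = zr X' Z" using confH[OF c2] by auto
  have tri: "p' \<odot> g = p" using tri0 idl[OF ih(2)] by simp
  have k2: "is_kernel C X' i' Y' p' Z" using confK[OF c2] .
  have dp: "deflation conf Y p Z" unfolding deflation_def using c1 by blast
  obtain P \<pi>1 \<pi>2 where pb: "is_pullback C P \<pi>1 \<pi>2 Y p Y' p' Z" and dpi: "deflation conf P \<pi>2 Y'"
    using R2[OF dp ih'(2)] by blast
  have ph: "\<pi>1 \<in> H P Y" "\<pi>2 \<in> H P Y'" "p \<odot> \<pi>1 = p' \<odot> \<pi>2" using pbH[OF pb] by auto
  have gp: "g \<odot> \<pi>1 \<in> H P Y'" using hc[OF ph(1) gh] .
  have dd: "\<pi>2 \<boxplus> ng (g \<odot> \<pi>1) \<in> H P Y'" using hp[OF ph(2) hn[OF gp]] .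
  have "p' \<odot> (\<pi>2 \<boxplus> ng (g \<odot> \<pi>1)) = p' \<odot> \<pi>2 \<boxplus> p' \<odot> ng (g \<odot> \<pi>1)" using dl[OF ph(2) hn[OF gp] ih'(2)] .
  also have "p' \<odot> ng (g \<odot> \<pi>1) = ng (p' \<odot> (g \<odot> \<pi>1))" using cn[OF gp ih'(2)] .
  also have "p' \<odot> (g \<odot> \<pi>1) = p \<odot> \<pi>1" using assoc[OF ph(1) gh ih'(2)] tri by simp
  also have "p' \<odot> \<pi>2 = p \<odot> \<pi>1" using ph(3) by simp
  also have "p \<odot> \<pi>1 \<boxplus> ng (p \<odot> \<pi>1) = zr P Z" using an[OF hc[OF ph(1) ih(2)]] .
  finally have "p' \<odot> (\<pi>2 \<boxplus> ng (g \<odot> \<pi>1)) = zr P Z" .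
  then obtain \<beta> where bh: "\<beta> \<in> H P X'" "i' \<odot> \<beta> = \<pi>2 \<boxplus> ng (g \<odot> \<pi>1)"
    using ker_lift[OF k2 dd] by blast
  have dec0: "\<pi>2 = i' \<odot> \<beta> \<boxplus> g \<odot> \<pi>1" using add_sub[OF hc[OF bh(1) ih'(1)] gp ph(2) bh(2)] .
  have i'mono: "u1 = u2" if "u1 \<in> H T X'" "u2 \<in> H T X'" "i' \<odot> u1 = i' \<odot> u2" for u1 u2 T
    using ker_mono[OF k2 that] .
  have "p \<odot> ide Y = p' \<odot> g" using idr[OF ih(2)] tri by simp
  then obtain w where w: "w \<in> H Y P" "\<pi>1 \<odot> w = ide Y" "\<pi>2 \<odot> w = g"
    using pb_lift[OF pb hid[OF obL[OF ih(2)]] gh] by blast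
  have "g = (i' \<odot> \<beta> \<boxplus> g \<odot> \<pi>1) \<odot> w" using w(3) dec0 by simp
  also have "\<dots> = (i' \<odot> \<beta>) \<odot> w \<boxplus> (g \<odot> \<pi>1) \<odot> w" using dr[OF w(1) hc[OF bh(1) ih'(1)] gp] .
  also have "(g \<odot> \<pi>1) \<odot> w = g" using assoc[OF w(1) ph(1) gh] w(2) idr[OF gh] by simp
  also have "(i' \<odot> \<beta>) \<odot> w = i' \<odot> (\<beta> \<odot> w)" using assoc[OF w(1) bh(1) ih'(1)] by simp
  finally have "g = i' \<odot> (\<beta> \<odot> w) \<boxplus> g" .
  then have "i' \<odot> (\<beta> \<odot> w) \<boxplus> g = zr Y Y' \<boxplus> g" using a0l[OF gh] by simp
  then have "i' \<odot> (\<beta> \<odot> w) = zr Y Y'" using cancel[OF hc[OF hc[OF w(1) bh(1)] ih'(1)] hz'[OF gh gh] gh] by blast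
  also have "\<dots> = i' \<odot> zr Y X'" using c0'[OF ih'(1) gh] by simp
  finally have bw: "\<beta> \<odot> w = zr Y X'" using i'mono[OF hc[OF w(1) bh(1)] hz'[OF gh fh]] by blast
  have "p \<odot> zr X' Y = p' \<odot> i'" using c0'[OF ih(2) ih'(1)] ih'(3) by simp
  then obtain w2 where w2: "w2 \<in> H X' P" "\<pi>1 \<odot> w2 = zr X' Y" "\<pi>2 \<odot> w2 = i'"
    using pb_lift[OF pb hz'[OF ih'(1) ih(1)] ih'(1)] by blast
  have "i' = (i' \<odot> \<beta> \<boxplus> g \<odot> \<pi>1) \<odot> w2" using w2(3) dec0 by simp
  also have "\<dots> = (i' \<odot> \<beta>) \<odot> w2 \<boxplus> (g \<odot> \<pi>1) \<odot> w2" using dr[OF w2(1) hc[OF bh(1) ih'(1)] gp] .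
  also have "(g \<odot> \<pi>1) \<odot> w2 = zr X' Y'" using assoc[OF w2(1) ph(1) gh] w2(2) c0'[OF gh ih'(1)] by simp
  also have "(i' \<odot> \<beta>) \<odot> w2 = i' \<odot> (\<beta> \<odot> w2)" using assoc[OF w2(1) bh(1) ih'(1)] by simp
  finally have "i' = i' \<odot> (\<beta> \<odot> w2)" using a0[OF hc[OF hc[OF w2(1) bh(1)] ih'(1)]] by simp
  then have "i' \<odot> (\<beta> \<odot> w2) = i' \<odot> ide X'" using idr[OF ih'(1)] by simp
  then have bw2: "\<beta> \<odot> w2 = ide X'" using i'mono[OF hc[OF w2(1) bh(1)] hid[OF obL[OF ih'(1)]]] by blast
  show ?thesis using pb dpi bh(1) dec0 w bw w2 bw2 by blast
qed

end

context dex begin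

lemma part1:
  assumes ad: "admissibly_deflation_percolating C conf \<A>"
    and c1: "conf X i Y p Z" and c2: "conf X' i' Y' p' Z"
    and fh: "f \<in> H X X'" and gh: "g \<in> H Y Y'"
    and sq: "g \<odot> i = i' \<odot> f" and tri0: "p' \<odot> g = ide Z \<odot> p"
    and cf: "conf X f X' c A0" and A0: "A0 \<in> \<A>"
  shows "A_inflation conf \<A> Y g Y'"
proof -
  have ih: "i \<in> H X Y" "p \<in> H Y Z" "p \<odot> i = zr X Z" using confH[OF c1] by auto
  have ih': "i' \<in> H X' Y'" "p' \<in> H Y' Z" "p' \<odot> i' = zr X' Z" using confH[OF c2] by auto
  have tri: "p' \<odot> g = p" using tri0 idl[OF ih(2)] by simp
  have k1: "is_kernel C X i Y p Z" using confK[OF c1] .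
  have k2: "is_kernel C X' i' Y' p' Z" using confK[OF c2] .
  obtain P \<pi>1 \<pi>2 \<beta> w w2 where pb: "is_pullback C P \<pi>1 \<pi>2 Y p Y' p' Z" and dpi: "deflation conf P \<pi>2 Y'"
    and bh: "\<beta> \<in> H P X'" and dec0: "\<pi>2 = i' \<odot> \<beta> \<boxplus> g \<odot> \<pi>1"
    and w: "w \<in> H Y P" "\<pi>1 \<odot> w = ide Y" "\<pi>2 \<odot> w = g" "\<beta> \<odot> w = zr Y X'"
    and w2: "w2 \<in> H X' P" "\<pi>1 \<odot> w2 = zr X' Y" "\<pi>2 \<odot> w2 = i'" "\<beta> \<odot> w2 = ide X'"
    using common[OF c1 c2 fh gh sq tri0] by blast
  have ph: "\<pi>1 \<in> H P Y" "\<pi>2 \<in> H P Y'" "p \<odot> \<pi>1 = p' \<odot> \<pi>2" using pbH[OF pb] by auto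
  have dec: "\<pi>2 \<odot> s = i' \<odot> (\<beta> \<odot> s) \<boxplus> g \<odot> (\<pi>1 \<odot> s)" if s: "s \<in> H T P" for s T
  proof -
    have "\<pi>2 \<odot> s = (i' \<odot> \<beta>) \<odot> s \<boxplus> (g \<odot> \<pi>1) \<odot> s"
      using dr[OF s hc[OF bh ih'(1)] hc[OF ph(1) gh]] dec0 by simp
    then show ?thesis using assoc[OF s bh ih'(1)] assoc[OF s ph(1) gh] by simp
  qed
  have i'mono: "u1 = u2" if "u1 \<in> H T X'" "u2 \<in> H T X'" "i' \<odot> u1 = i' \<odot> u2" for u1 u2 T
    using ker_mono[OF k2 that] .
  have fk: "is_kernel C X f X' c A0" using confK[OF cf] .
  have fc: "is_cokernel C X f X' c A0" using confC[OF cf] .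
  have chs: "c \<in> H X' A0" "c \<odot> f = zr X A0" using confH[OF cf] by auto
  obtain Kp kp where ckp: "conf Kp kp P \<pi>2 Y'" using dpi unfolding deflation_def by blast
  have kph: "kp \<in> H Kp P" "\<pi>2 \<odot> kp = zr Kp Y'" using confH[OF ckp] by auto
  have cbk: "(c \<odot> \<beta>) \<odot> kp = zr Kp A0"
  proof -
    have "p \<odot> (\<pi>1 \<odot> kp) = p' \<odot> (\<pi>2 \<odot> kp)" using assoc[OF kph(1) ph(1) ih(2)] assoc[OF kph(1) ph(2) ih'(2)] ph(3) by simp
    also have "\<dots> = zr Kp Z" using kph(2) c0'[OF ih'(2) kph(1)] by simp
    finally obtain a where a: "a \<in> H Kp X" "i \<odot> a = \<pi>1 \<odot> kp" using ker_lift[OF k1 hc[OF kph(1) ph(1)]] by blast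
    have "zr Kp Y' = i' \<odot> (\<beta> \<odot> kp) \<boxplus> g \<odot> (i \<odot> a)" using dec[OF kph(1)] kph(2) a(2) by simp
    also have "g \<odot> (i \<odot> a) = i' \<odot> (f \<odot> a)" using sq assoc[OF a(1) ih(1) gh] assoc[OF a(1) fh ih'(1)] by simp
    also have "i' \<odot> (\<beta> \<odot> kp) \<boxplus> i' \<odot> (f \<odot> a) = i' \<odot> (\<beta> \<odot> kp \<boxplus> f \<odot> a)"
      using dl[OF hc[OF kph(1) bh] hc[OF a(1) fh] ih'(1)] by simp
    finally have "i' \<odot> (\<beta> \<odot> kp \<boxplus> f \<odot> a) = i' \<odot> zr Kp X'" using c0'[OF ih'(1) kph(1)] by simp
    then have e: "\<beta> \<odot> kp \<boxplus> f \<odot> a = zr Kp X'"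
      using i'mono[OF hp[OF hc[OF kph(1) bh] hc[OF a(1) fh]] hz'[OF kph(1) fh]] by blast
    have "c \<odot> (\<beta> \<odot> kp) \<boxplus> c \<odot> (f \<odot> a) = c \<odot> (\<beta> \<odot> kp \<boxplus> f \<odot> a)"
      using dl[OF hc[OF kph(1) bh] hc[OF a(1) fh] chs(1)] by simp
    also have "\<dots> = zr Kp A0" using e c0'[OF chs(1) kph(1)] by simp
    finally have 1: "c \<odot> (\<beta> \<odot> kp) \<boxplus> c \<odot> (f \<odot> a) = zr Kp A0" .
    have "c \<odot> (f \<odot> a) = zr Kp A0" using assoc[OF a(1) fh chs(1)] chs(2) z0c'[OF a(1) chs(1)] by simp
    then have "c \<odot> (\<beta> \<odot> kp) = zr Kp A0" using 1 a0[OF hc[OF hc[OF kph(1) bh] chs(1)]] by simp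
    then show ?thesis using assoc[OF kph(1) bh chs(1)] by simp
  qed
  obtain q where q: "q \<in> H Y' A0" "q \<odot> \<pi>2 = c \<odot> \<beta>"
    using cok_desc[OF confC[OF ckp] hc[OF bh chs(1)] cbk] by blast
  have qg: "q \<odot> g = zr Y A0"
  proof -
    have "q \<odot> g = (q \<odot> \<pi>2) \<odot> w" using w(3) assoc[OF w(1) ph(2) q(1)] by simp
    also have "\<dots> = c \<odot> (\<beta> \<odot> w)" using q(2) assoc[OF w(1) bh chs(1)] by simp
    finally show ?thesis using w(4) c0'[OF chs(1) gh] by simp
  qed
  have qi: "q \<odot> i' = c"
  proof -
    have "q \<odot> i' = (q \<odot> \<pi>2) \<odot> w2" using w2(3) assoc[OF w2(1) ph(2) q(1)] by simp
    also have "\<dots> = c \<odot> (\<beta> \<odot> w2)" using q(2) assoc[OF w2(1) bh chs(1)] by simp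
    finally show ?thesis using w2(4) idr[OF chs(1)] by simp
  qed
  have "\<forall>X A c. A \<in> \<A> \<and> c \<in> H X A \<longrightarrow>
        (\<exists>A' d i. A' \<in> \<A> \<and> deflation conf X d A' \<and> inflation conf A' i A \<and> c = i \<odot> d)"
    using ad unfolding admissibly_deflation_percolating_def by blast
  then obtain A'' d m where Am: "A'' \<in> \<A>" "deflation conf Y' d A''" "inflation conf A'' m A0" "q = m \<odot> d"
    using q(1) A0 by blast
  obtain Kd kd where cd: "conf Kd kd Y' d A''" using Am(2) unfolding deflation_def by blast
  obtain r R where cm: "conf A'' m A0 r R" using Am(3) unfolding inflation_def by blast
  have dh: "kd \<in> H Kd Y'" "d \<in> H Y' A''" using confH[OF cd] by auto
  have mh: "m \<in> H A'' A0" "r \<in> H A0 R" "r \<odot> m = zr A'' R" using confH[OF cm] by auto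
  have "r \<odot> c = r \<odot> (m \<odot> (d \<odot> i'))" using qi Am(4) assoc[OF ih'(1) dh(2) mh(1)] by simp
  also have "\<dots> = (r \<odot> m) \<odot> (d \<odot> i')" using assoc[OF hc[OF ih'(1) dh(2)] mh(1) mh(2)] .
  also have "\<dots> = zr X' R" using mh(3) z0c'[OF hc[OF ih'(1) dh(2)] mh(2)] by simp
  also have "\<dots> = zr A0 R \<odot> c" using z0c'[OF chs(1) mh(2)] by simp
  finally have "r \<odot> c = zr A0 R \<odot> c" .
  then have r0: "r = zr A0 R" using cok_epi[OF fc mh(2) hz'[OF mh(2) mh(2)]] by blast
  have "r \<odot> ide A0 = zr A0 R" using r0 idr[OF mh(2)] by simp
  then obtain u where u: "u \<in> H A0 A''" "m \<odot> u = ide A0"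
    using ker_lift[OF confK[OF cm] hid[OF obR[OF mh(1)]]] by blast
  have "m \<odot> (u \<odot> m) = (m \<odot> u) \<odot> m" using assoc[OF mh(1) u(1) mh(1)] .
  also have "\<dots> = m \<odot> ide A''" using u(2) idl[OF mh(1)] idr[OF mh(1)] by simp
  finally have "u \<odot> m = ide A''" using ker_mono[OF confK[OF cm] hc[OF mh(1) u(1)] hid[OF obL[OF mh(1)]]] by blast
  then have miso: "is_iso C A'' A0 m" using iso_intro[OF mh(1) u(1)] u(2) by blast
  have cq: "conf Kd kd Y' q A0"
    using conf_iso[OF cd dh(1) q(1) iso_id[OF obL[OF dh(1)]] iso_id[OF obR[OF dh(1)]] miso]
      idr[OF dh(1)] idl[OF dh(1)] idr[OF q(1)] Am(4) by simp
  have gmono: "u1 = u2" if uh: "u1 \<in> H T Y" "u2 \<in> H T Y" "g \<odot> u1 = g \<odot> u2" for u1 u2 T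
  proof -
    let ?d = "u1 \<boxplus> ng u2"
    have dh': "?d \<in> H T Y" using hp[OF uh(1) hn[OF uh(2)]] .
    have "g \<odot> ?d = g \<odot> u1 \<boxplus> g \<odot> ng u2" using dl[OF uh(1) hn[OF uh(2)] gh] .
    also have "\<dots> = g \<odot> u2 \<boxplus> ng (g \<odot> u2)" using cn[OF uh(2) gh] uh(3) by simp
    finally have gd: "g \<odot> ?d = zr T Y'" using an[OF hc[OF uh(2) gh]] by simp
    have "p \<odot> ?d = p' \<odot> (g \<odot> ?d)" using assoc[OF dh' gh ih'(2)] tri by simp
    also have "\<dots> = zr T Z" using gd c0'[OF ih'(2) dh'] by simp
    finally obtain a where a: "a \<in> H T X" "i \<odot> a = ?d" using ker_lift[OF k1 dh'] by blast
    have "i' \<odot> (f \<odot> a) = g \<odot> ?d" using sq assoc[OF a(1) ih(1) gh] assoc[OF a(1) fh ih'(1)] a(2) by simp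
    also have "\<dots> = i' \<odot> zr T X'" using gd c0'[OF ih'(1) a(1)] by simp
    finally have "f \<odot> a = zr T X'" using i'mono[OF hc[OF a(1) fh] hz'[OF a(1) fh]] by blast
    also have "\<dots> = f \<odot> zr T X" using c0'[OF fh a(1)] by simp
    finally have "a = zr T X" using ker_mono[OF fk a(1) hz'[OF a(1) a(1)]] by blast
    then have "?d = zr T Y" using a(2) c0'[OF ih(1) a(1)] by simp
    then show ?thesis using sub_zero[OF uh(1) uh(2)] by blast
  qed
  have gk: "is_kernel C Y g Y' q A0"
    unfolding is_kernel_def
  proof (intro conjI gh q(1) qg allI ballI impI)
    fix T t assume th: "t \<in> H T Y'" and qt: "q \<odot> t = zr T A0"
    have dpi': "deflation conf P \<pi>2 Y'" using dpi .
    obtain T' s e where pb2: "is_pullback C T' s e P \<pi>2 T t Y'" and de: "deflation conf T' e T"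
      using R2[OF dpi' th] by blast
    have sh: "s \<in> H T' P" "e \<in> H T' T" "\<pi>2 \<odot> s = t \<odot> e" using pbH[OF pb2] by auto
    have "c \<odot> (\<beta> \<odot> s) = (q \<odot> \<pi>2) \<odot> s" using q(2) assoc[OF sh(1) bh chs(1)] by simp
    also have "\<dots> = (q \<odot> t) \<odot> e" using assoc[OF sh(1) ph(2) q(1)] assoc[OF sh(2) th q(1)] sh(3) by simp
    also have "\<dots> = zr T' A0" using qt z0c'[OF sh(2) q(1)] by simp
    finally obtain x where x: "x \<in> H T' X" "f \<odot> x = \<beta> \<odot> s" using ker_lift[OF fk hc[OF sh(1) bh]] by blast
    let ?z = "i \<odot> x \<boxplus> \<pi>1 \<odot> s"
    have zh: "?z \<in> H T' Y" using hp[OF hc[OF x(1) ih(1)] hc[OF sh(1) ph(1)]] .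
    have "t \<odot> e = i' \<odot> (f \<odot> x) \<boxplus> g \<odot> (\<pi>1 \<odot> s)" using dec[OF sh(1)] sh(3) x(2) by simp
    also have "i' \<odot> (f \<odot> x) = g \<odot> (i \<odot> x)" using sq assoc[OF x(1) ih(1) gh] assoc[OF x(1) fh ih'(1)] by simp
    also have "g \<odot> (i \<odot> x) \<boxplus> g \<odot> (\<pi>1 \<odot> s) = g \<odot> ?z" using dl[OF hc[OF x(1) ih(1)] hc[OF sh(1) ph(1)] gh] by simp
    finally have tez: "t \<odot> e = g \<odot> ?z" .
    obtain Ke ke where ce: "conf Ke ke T' e T" using de unfolding deflation_def by blast
    have keh: "ke \<in> H Ke T'" "e \<odot> ke = zr Ke T" using confH[OF ce] by auto
    have "g \<odot> (?z \<odot> ke) = (g \<odot> ?z) \<odot> ke" using assoc[OF keh(1) zh gh] .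
    also have "\<dots> = t \<odot> (e \<odot> ke)" using tez assoc[OF keh(1) sh(2) th] by simp
    also have "\<dots> = g \<odot> zr Ke Y" using keh(2) c0'[OF th keh(1)] c0'[OF gh keh(1)] by simp
    finally have "?z \<odot> ke = zr Ke Y" using gmono[OF hc[OF keh(1) zh] hz'[OF keh(1) zh]] by blast
    then obtain w0 where w0: "w0 \<in> H T Y" "w0 \<odot> e = ?z" using cok_desc[OF confC[OF ce] zh] by blast
    have "(g \<odot> w0) \<odot> e = t \<odot> e" using assoc[OF sh(2) w0(1) gh] w0(2) tez by simp
    then have "g \<odot> w0 = t" using cok_epi[OF confC[OF ce] hc[OF w0(1) gh] th] by blast
    then have ex: "w0 \<in> H T Y \<and> g \<odot> w0 = t" using w0(1) by blast
    show "\<exists>!u. u \<in> H T Y \<and> g \<odot> u = t"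
    proof (rule ex1I[of _ w0])
      show "w0 \<in> H T Y \<and> g \<odot> w0 = t" using ex .
      fix y assume "y \<in> H T Y \<and> g \<odot> y = t"
      then show "y = w0" using gmono[of y T w0] ex by auto
    qed
  qed
  have "conf Y g Y' q A0" using ker_transport[OF cq gk] .
  then show ?thesis unfolding A_inflation_def using A0 by blast
qed

end

context dex begin

lemma part2:
  assumes ad: "admissibly_deflation_percolating C conf \<A>"
    and c1: "conf X i Y p Z" and c2: "conf X' i' Y' p' Z"
    and fh: "f \<in> H X X'" and gh: "g \<in> H Y Y'"
    and sq: "g \<odot> i = i' \<odot> f" and tri0: "p' \<odot> g = ide Z \<odot> p"
    and ck: "conf K k X f X'" and KA: "K \<in> \<A>"
  shows "A_deflation conf \<A> Y g Y'"
proof -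
  have ih: "i \<in> H X Y" "p \<in> H Y Z" "p \<odot> i = zr X Z" using confH[OF c1] by auto
  have ih': "i' \<in> H X' Y'" "p' \<in> H Y' Z" "p' \<odot> i' = zr X' Z" using confH[OF c2] by auto
  have tri: "p' \<odot> g = p" using tri0 idl[OF ih(2)] by simp
  have k1: "is_kernel C X i Y p Z" using confK[OF c1] .
  have k2: "is_kernel C X' i' Y' p' Z" using confK[OF c2] .
  obtain P \<pi>1 \<pi>2 \<beta> w w2 where pb: "is_pullback C P \<pi>1 \<pi>2 Y p Y' p' Z" and dpi: "deflation conf P \<pi>2 Y'"
    and bh: "\<beta> \<in> H P X'" and dec0: "\<pi>2 = i' \<odot> \<beta> \<boxplus> g \<odot> \<pi>1"
    and w: "w \<in> H Y P" "\<pi>1 \<odot> w = ide Y" "\<pi>2 \<odot> w = g" "\<beta> \<odot> w = zr Y X'"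
    and w2: "w2 \<in> H X' P" "\<pi>1 \<odot> w2 = zr X' Y" "\<pi>2 \<odot> w2 = i'" "\<beta> \<odot> w2 = ide X'"
    using common[OF c1 c2 fh gh sq tri0] by blast
  have ph: "\<pi>1 \<in> H P Y" "\<pi>2 \<in> H P Y'" "p \<odot> \<pi>1 = p' \<odot> \<pi>2" using pbH[OF pb] by auto
  have dec: "\<pi>2 \<odot> s = i' \<odot> (\<beta> \<odot> s) \<boxplus> g \<odot> (\<pi>1 \<odot> s)" if s: "s \<in> H T P" for s T
  proof -
    have "\<pi>2 \<odot> s = (i' \<odot> \<beta>) \<odot> s \<boxplus> (g \<odot> \<pi>1) \<odot> s"
      using dr[OF s hc[OF bh ih'(1)] hc[OF ph(1) gh]] dec0 by simp
    then show ?thesis using assoc[OF s bh ih'(1)] assoc[OF s ph(1) gh] by simp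
  qed
  have sqa: "g \<odot> (i \<odot> x) = i' \<odot> (f \<odot> x)" if x: "x \<in> H T X" for x T
    using sq assoc[OF x ih(1) gh] assoc[OF x fh ih'(1)] by simp
  have i'mono: "u1 = u2" if "u1 \<in> H T X'" "u2 \<in> H T X'" "i' \<odot> u1 = i' \<odot> u2" for u1 u2 T
    using ker_mono[OF k2 that] .
  have imono: "u1 = u2" if "u1 \<in> H T X" "u2 \<in> H T X" "i \<odot> u1 = i \<odot> u2" for u1 u2 T
    using ker_mono[OF k1 that] .
  have kf: "is_kernel C K k X f X'" using confK[OF ck] .
  have kfh: "k \<in> H K X" "f \<odot> k = zr K X'" using confH[OF ck] by auto
  have kmono: "u1 = u2" if "u1 \<in> H T K" "u2 \<in> H T K" "k \<odot> u1 = k \<odot> u2" for u1 u2 T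
    using ker_mono[OF kf that] .
  have df: "deflation conf X f X'" unfolding deflation_def using ck by blast
  have dp: "deflation conf Y p Z" unfolding deflation_def using c1 by blast
  obtain D \<delta> \<Phi> where pbD: "is_pullback C D \<delta> \<Phi> X f P \<beta> X'" and dPhi: "deflation conf D \<Phi> P"
    using R2[OF df bh] by blast
  have pD: "\<delta> \<in> H D X" "\<Phi> \<in> H D P" "f \<odot> \<delta> = \<beta> \<odot> \<Phi>" using pbH[OF pbD] by auto
  let ?h = "\<pi>2 \<odot> \<Phi>"
  have hh: "?h \<in> H D Y'" using hc[OF pD(2) ph(2)] .
  have "deflation conf D ?h Y'" using R1[OF dPhi dpi] .
  then obtain Cc a where cha: "conf Cc a D ?h Y'" unfolding deflation_def by blast
  have ah: "a \<in> H Cc D" "?h \<odot> a = zr Cc Y'" using confH[OF cha] by auto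
  let ?d1 = "\<pi>1 \<odot> \<Phi> \<boxplus> i \<odot> \<delta>"
  have d1h: "?d1 \<in> H D Y" using hp[OF hc[OF pD(2) ph(1)] hc[OF pD(1) ih(1)]] .
  have hd: "?h = g \<odot> ?d1"
  proof -
    have "?h = i' \<odot> (\<beta> \<odot> \<Phi>) \<boxplus> g \<odot> (\<pi>1 \<odot> \<Phi>)" using dec[OF pD(2)] .
    also have "i' \<odot> (\<beta> \<odot> \<Phi>) = g \<odot> (i \<odot> \<delta>)" using sqa[OF pD(1)] pD(3) by simp
    also have "g \<odot> (i \<odot> \<delta>) \<boxplus> g \<odot> (\<pi>1 \<odot> \<Phi>) = g \<odot> (\<pi>1 \<odot> \<Phi>) \<boxplus> g \<odot> (i \<odot> \<delta>)"
      using acomm[OF hc[OF hc[OF pD(1) ih(1)] gh] hc[OF hc[OF pD(2) ph(1)] gh]] .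
    also have "\<dots> = g \<odot> ?d1" using dl[OF hc[OF pD(2) ph(1)] hc[OF pD(1) ih(1)] gh] by simp
    finally show ?thesis .
  qed
  let ?e = "\<Phi> \<odot> a"
  have eh: "?e \<in> H Cc P" using hc[OF ah(1) pD(2)] .
  have pe: "\<pi>2 \<odot> ?e = zr Cc Y'" using assoc[OF ah(1) pD(2) ph(2)] ah(2) by simp
  have "p \<odot> (\<pi>1 \<odot> ?e) = p' \<odot> (\<pi>2 \<odot> ?e)" using assoc[OF eh ph(1) ih(2)] assoc[OF eh ph(2) ih'(2)] ph(3) by simp
  also have "\<dots> = zr Cc Z" using pe c0'[OF ih'(2) eh] by simp
  finally obtain x0 where x0: "x0 \<in> H Cc X" "i \<odot> x0 = \<pi>1 \<odot> ?e" using ker_lift[OF k1 hc[OF eh ph(1)]] by blast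
  have da: "\<delta> \<odot> a \<in> H Cc X" using hc[OF ah(1) pD(1)] .
  have "zr Cc Y' = i' \<odot> (\<beta> \<odot> ?e) \<boxplus> g \<odot> (i \<odot> x0)" using dec[OF eh] pe x0(2) by simp
  also have "\<beta> \<odot> ?e = f \<odot> (\<delta> \<odot> a)" using assoc[OF ah(1) pD(2) bh] assoc[OF ah(1) pD(1) fh] pD(3) by simp
  also have "g \<odot> (i \<odot> x0) = i' \<odot> (f \<odot> x0)" using sqa[OF x0(1)] .
  also have "i' \<odot> (f \<odot> (\<delta> \<odot> a)) \<boxplus> i' \<odot> (f \<odot> x0) = i' \<odot> (f \<odot> (\<delta> \<odot> a) \<boxplus> f \<odot> x0)"
    using dl[OF hc[OF da fh] hc[OF x0(1) fh] ih'(1)] by simp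
  also have "f \<odot> (\<delta> \<odot> a) \<boxplus> f \<odot> x0 = f \<odot> (\<delta> \<odot> a \<boxplus> x0)" using dl[OF da x0(1) fh] by simp
  finally have "i' \<odot> (f \<odot> (\<delta> \<odot> a \<boxplus> x0)) = i' \<odot> zr Cc X'" using c0'[OF ih'(1) ah(1)] by simp
  then have "f \<odot> (\<delta> \<odot> a \<boxplus> x0) = zr Cc X'" using i'mono[OF hc[OF hp[OF da x0(1)] fh] hz'[OF ah(1) fh]] by blast
  then obtain b where bb: "b \<in> H Cc K" "k \<odot> b = \<delta> \<odot> a \<boxplus> x0" using ker_lift[OF kf hp[OF da x0(1)]] by blast
  have ikh: "i \<odot> k \<in> H K Y" using hc[OF kfh(1) ih(1)] .
  have d1a: "?d1 \<odot> a = (i \<odot> k) \<odot> b"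
  proof -
    have "?d1 \<odot> a = (\<pi>1 \<odot> \<Phi>) \<odot> a \<boxplus> (i \<odot> \<delta>) \<odot> a" using dr[OF ah(1) hc[OF pD(2) ph(1)] hc[OF pD(1) ih(1)]] .
    also have "(\<pi>1 \<odot> \<Phi>) \<odot> a = i \<odot> x0" using assoc[OF ah(1) pD(2) ph(1)] x0(2) by simp
    also have "(i \<odot> \<delta>) \<odot> a = i \<odot> (\<delta> \<odot> a)" using assoc[OF ah(1) pD(1) ih(1)] by simp
    also have "i \<odot> x0 \<boxplus> i \<odot> (\<delta> \<odot> a) = i \<odot> (x0 \<boxplus> \<delta> \<odot> a)" using dl[OF x0(1) da ih(1)] by simp
    also have "x0 \<boxplus> \<delta> \<odot> a = k \<odot> b" using bb(2) acomm[OF x0(1) da] by simp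
    also have "i \<odot> (k \<odot> b) = (i \<odot> k) \<odot> b" using assoc[OF bb(1) kfh(1) ih(1)] .
    finally show ?thesis .
  qed
  have I1: "k \<odot> (b \<odot> v) = \<delta> \<odot> (a \<odot> v) \<boxplus> x0 \<odot> v" if v: "v \<in> H T Cc" for v T
  proof -
    have "k \<odot> (b \<odot> v) = (\<delta> \<odot> a \<boxplus> x0) \<odot> v" using assoc[OF v bb(1) kfh(1)] bb(2) by simp
    also have "\<dots> = (\<delta> \<odot> a) \<odot> v \<boxplus> x0 \<odot> v" using dr[OF v da x0(1)] .
    finally show ?thesis using assoc[OF v ah(1) pD(1)] by simp
  qed
  have I2: "i \<odot> (x0 \<odot> v) = \<pi>1 \<odot> (\<Phi> \<odot> (a \<odot> v))" if v: "v \<in> H T Cc" for v T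
    using assoc[OF v x0(1) ih(1)] x0(2) assoc[OF v eh ph(1)] assoc[OF v ah(1) pD(2)] by simp
  have I3: "\<pi>2 \<odot> (\<Phi> \<odot> (a \<odot> v)) = zr T Y'" if v: "v \<in> H T Cc" for v T
    using assoc[OF v ah(1) pD(2)] assoc[OF v eh ph(2)] pe z0c'[OF v ph(2)] by simp
  text \<open>b is a deflation\<close>
  have z0: "zr K Z \<in> H K Z" using hz'[OF kfh(1) ih(2)] .
  obtain E0 v0 b0 where pbE: "is_pullback C E0 v0 b0 Y p K (zr K Z) Z" and dE: "deflation conf E0 b0 K"
    using R2[OF dp z0] by blast
  obtain KE kE where cE: "conf KE kE E0 b0 K" using dE unfolding deflation_def by blast
  let ?c2 = "i \<odot> (\<delta> \<odot> a)"
  have c2h: "?c2 \<in> H Cc Y" using hc[OF da ih(1)] .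
  have pbC: "is_pullback C Cc ?c2 b Y p K (zr K Z) Z"
    unfolding is_pullback_def
  proof (intro conjI c2h bb(1) ih(2) z0 allI ballI impI)
    show "Cc \<in> Ob C" using obL[OF ah(1)] .
    have "p \<odot> ?c2 = zr Cc Z" using assoc[OF da ih(1) ih(2)] ih(3) z0c'[OF da ih(2)] by simp
    then show "p \<odot> ?c2 = zr K Z \<odot> b" using z0c'[OF bb(1) ih(2)] by simp
    fix T u v assume u: "u \<in> H T Y" and v: "v \<in> H T K" and puv: "p \<odot> u = zr K Z \<odot> v"
    have "p \<odot> u = zr T Z" using puv z0c'[OF v ih(2)] by simp
    then obtain u' where u': "u' \<in> H T X" "i \<odot> u' = u" using ker_lift[OF k1 u] by blast
    let ?xx = "k \<odot> v \<boxplus> ng u'"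
    have xxh: "?xx \<in> H T X" using hp[OF hc[OF v kfh(1)] hn[OF u'(1)]] .
    have "p \<odot> (i \<odot> ?xx) = zr T Z" using assoc[OF xxh ih(1) ih(2)] ih(3) z0c'[OF xxh ih(2)] by simp
    also have "\<dots> = p' \<odot> zr T Y'" using c0'[OF ih'(2) xxh] by simp
    finally obtain e' where e': "e' \<in> H T P" "\<pi>1 \<odot> e' = i \<odot> ?xx" "\<pi>2 \<odot> e' = zr T Y'"
      using pb_lift[OF pb hc[OF xxh ih(1)] hz'[OF u gh]] by blast
    have "f \<odot> ?xx = f \<odot> (k \<odot> v) \<boxplus> f \<odot> ng u'" using dl[OF hc[OF v kfh(1)] hn[OF u'(1)] fh] .
    also have "f \<odot> (k \<odot> v) = zr T X'" using assoc[OF v kfh(1) fh] kfh(2) z0c'[OF v fh] by simp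
    also have "f \<odot> ng u' = ng (f \<odot> u')" using cn[OF u'(1) fh] .
    finally have fxx: "f \<odot> ?xx = ng (f \<odot> u')" using a0l[OF hn[OF hc[OF u'(1) fh]]] by simp
    have "zr T Y' = i' \<odot> (\<beta> \<odot> e') \<boxplus> g \<odot> (i \<odot> ?xx)" using dec[OF e'(1)] e' by simp
    also have "g \<odot> (i \<odot> ?xx) = i' \<odot> ng (f \<odot> u')" using sqa[OF xxh] fxx by simp
    also have "i' \<odot> (\<beta> \<odot> e') \<boxplus> i' \<odot> ng (f \<odot> u') = i' \<odot> (\<beta> \<odot> e' \<boxplus> ng (f \<odot> u'))"
      using dl[OF hc[OF e'(1) bh] hn[OF hc[OF u'(1) fh]] ih'(1)] by simp
    finally have "i' \<odot> (\<beta> \<odot> e' \<boxplus> ng (f \<odot> u')) = i' \<odot> zr T X'" using c0'[OF ih'(1) u'(1)] by simp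
    then have "\<beta> \<odot> e' \<boxplus> ng (f \<odot> u') = zr T X'"
      using i'mono[OF hp[OF hc[OF e'(1) bh] hn[OF hc[OF u'(1) fh]]] hz'[OF u'(1) fh]] by blast
    then have be': "f \<odot> u' = \<beta> \<odot> e'" using sub_zero[OF hc[OF e'(1) bh] hc[OF u'(1) fh]] by simp
    obtain dd where dd: "dd \<in> H T D" "\<delta> \<odot> dd = u'" "\<Phi> \<odot> dd = e'" using pb_lift[OF pbD u'(1) e'(1) be'] by blast
    have "?h \<odot> dd = zr T Y'" using assoc[OF dd(1) pD(2) ph(2)] dd(3) e'(3) by simp
    then obtain w0 where w0: "w0 \<in> H T Cc" "a \<odot> w0 = dd" using ker_lift[OF confK[OF cha] dd(1)] by blast
    have char: "a \<odot> y = dd" if y: "y \<in> H T Cc" "?c2 \<odot> y = u" "b \<odot> y = v" for y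
    proof -
      have ay: "a \<odot> y \<in> H T D" using hc[OF y(1) ah(1)] .
      have "i \<odot> (\<delta> \<odot> (a \<odot> y)) = i \<odot> u'"
        using y(2) u'(2) assoc[OF y(1) da ih(1)] assoc[OF y(1) ah(1) pD(1)] by simp
      then have dy: "\<delta> \<odot> (a \<odot> y) = u'" using imono[OF hc[OF ay pD(1)] u'(1)] by blast
      have "k \<odot> v = u' \<boxplus> x0 \<odot> y" using I1[OF y(1)] y(3) dy by simp
      then have "x0 \<odot> y = k \<odot> v \<boxplus> ng u'"
        using sub_eq[OF hc[OF y(1) x0(1)] u'(1) hc[OF v kfh(1)]] acomm[OF u'(1) hc[OF y(1) x0(1)]] by simp
      then have "\<pi>1 \<odot> (\<Phi> \<odot> (a \<odot> y)) = \<pi>1 \<odot> e'" using I2[OF y(1)] e'(2) by simp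
      moreover have "\<pi>2 \<odot> (\<Phi> \<odot> (a \<odot> y)) = \<pi>2 \<odot> e'" using I3[OF y(1)] e'(3) by simp
      ultimately have "\<Phi> \<odot> (a \<odot> y) = e'" using pb_uniq[OF pb hc[OF ay pD(2)] e'(1)] by blast
      then show ?thesis using pb_uniq[OF pbD ay dd(1)] dy dd by simp
    qed
    have q1: "?c2 \<odot> w0 = u" using assoc[OF w0(1) da ih(1)] assoc[OF w0(1) ah(1) pD(1)] w0(2) dd(2) u'(2) by simp
    have "i \<odot> (x0 \<odot> w0) = i \<odot> ?xx" using I2[OF w0(1)] w0(2) dd(3) e'(2) by simp
    then have "x0 \<odot> w0 = ?xx" using imono[OF hc[OF w0(1) x0(1)] xxh] by blast
    then have "k \<odot> (b \<odot> w0) = u' \<boxplus> ?xx" using I1[OF w0(1)] w0(2) dd(2) by simp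
    also have "\<dots> = k \<odot> v"
      using add_sub[OF xxh u'(1) hc[OF v kfh(1)]] acomm[OF xxh u'(1)] by simp
    finally have q2: "b \<odot> w0 = v" using kmono[OF hc[OF w0(1) bb(1)] v] by blast
    show "\<exists>!y. y \<in> H T Cc \<and> ?c2 \<odot> y = u \<and> b \<odot> y = v"
    proof (rule ex1I[of _ w0])
      show "w0 \<in> H T Cc \<and> ?c2 \<odot> w0 = u \<and> b \<odot> w0 = v" using w0(1) q1 q2 by blast
      fix y assume y: "y \<in> H T Cc \<and> ?c2 \<odot> y = u \<and> b \<odot> y = v"
      then have "a \<odot> y = a \<odot> w0" using char w0(2) by blast
      then show "y = w0" using ker_mono[OF confK[OF cha]] y w0(1) by blast
    qed
  qed
  obtain Kb kb where cb: "conf Kb kb Cc b K" using pb_transport[OF pbE pbC cE] by blast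
  have db: "deflation conf Cc b K" unfolding deflation_def using cb by blast
  have ia: "inflation conf Cc a D" unfolding inflation_def using cha by blast
  have "\<forall>X D A a b. inflation conf X a D \<and> deflation conf X b A \<and> A \<in> \<A> \<longrightarrow>
        (\<exists>P b' a'. is_pushout C X a D b A b' a' P \<and> deflation conf D b' P \<and> inflation conf A a' P)"
    using ad unfolding admissibly_deflation_percolating_def by blast
  then obtain P0 b0' a0 where po: "is_pushout C Cc a D b K b0' a0 P0" and ia0: "inflation conf K a0 P0"
    using ia db KA by blast
  have poh: "P0 \<in> Ob C" "b0' \<in> H D P0" "a0 \<in> H K P0" "b0' \<odot> a = a0 \<odot> b"
    using po unfolding is_pushout_def by auto
  have poU: "\<exists>!w. w \<in> H P0 T \<and> w \<odot> b0' = u \<and> w \<odot> a0 = v"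
    if "u \<in> H D T" "v \<in> H K T" "u \<odot> a = v \<odot> b" for u v T
    using po that unfolding is_pushout_def by blast
  have "f \<odot> zr Y X = \<beta> \<odot> w" using c0'[OF fh gh] w(4) by simp
  then obtain \<sigma> where sg: "\<sigma> \<in> H Y D" "\<delta> \<odot> \<sigma> = zr Y X" "\<Phi> \<odot> \<sigma> = w"
    using pb_lift[OF pbD hz'[OF gh kfh(1)] w(1)] by blast
  have d1s: "?d1 \<odot> \<sigma> = ide Y"
  proof -
    have "?d1 \<odot> \<sigma> = (\<pi>1 \<odot> \<Phi>) \<odot> \<sigma> \<boxplus> (i \<odot> \<delta>) \<odot> \<sigma>" using dr[OF sg(1) hc[OF pD(2) ph(1)] hc[OF pD(1) ih(1)]] .
    also have "(\<pi>1 \<odot> \<Phi>) \<odot> \<sigma> = ide Y" using assoc[OF sg(1) pD(2) ph(1)] sg(3) w(2) by simp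
    also have "(i \<odot> \<delta>) \<odot> \<sigma> = zr Y Y" using assoc[OF sg(1) pD(1) ih(1)] sg(2) c0'[OF ih(1) gh] by simp
    finally show ?thesis using a0[OF hid[OF obL[OF gh]]] by simp
  qed
  have hs: "?h \<odot> \<sigma> = g" using assoc[OF sg(1) pD(2) ph(2)] sg(3) w(3) by simp
  obtain \<phi> where phi: "\<phi> \<in> H P0 Y" "\<phi> \<odot> b0' = ?d1" "\<phi> \<odot> a0 = i \<odot> k"
    using poU[OF d1h ikh d1a] by blast
  let ?\<psi> = "b0' \<odot> \<sigma>"
  have psh: "?\<psi> \<in> H Y P0" using hc[OF sg(1) poh(2)] .
  have pp: "\<phi> \<odot> ?\<psi> = ide Y" using assoc[OF sg(1) poh(2) phi(1)] phi(2) d1s by simp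
  let ?m0 = "ide D \<boxplus> ng (\<sigma> \<odot> ?d1)"
  have sd: "\<sigma> \<odot> ?d1 \<in> H D D" using hc[OF d1h sg(1)] .
  have idD: "ide D \<in> H D D" using hid[OF obL[OF d1h]] .
  have m0h: "?m0 \<in> H D D" using hp[OF idD hn[OF sd]] .
  have hsd: "?h \<odot> (\<sigma> \<odot> ?d1) = ?h" using assoc[OF d1h sg(1) hh] hs hd by simp
  have "?h \<odot> ?m0 = ?h \<odot> ide D \<boxplus> ?h \<odot> ng (\<sigma> \<odot> ?d1)" using dl[OF idD hn[OF sd] hh] .
  also have "\<dots> = ?h \<boxplus> ng ?h" using idr[OF hh] cn[OF sd hh] hsd by simp
  finally have "?h \<odot> ?m0 = zr D Y'" using an[OF hh] by simp
  then obtain s where s: "s \<in> H D Cc" "a \<odot> s = ?m0" using ker_lift[OF confK[OF cha] m0h] by blast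
  have d1sd: "?d1 \<odot> (\<sigma> \<odot> ?d1) = ?d1" using assoc[OF d1h sg(1) d1h] d1s idl[OF d1h] by simp
  have "i \<odot> (k \<odot> (b \<odot> s)) = ?d1 \<odot> ?m0"
    using assoc[OF hc[OF s(1) bb(1)] kfh(1) ih(1)] assoc[OF s(1) bb(1) ikh] d1a assoc[OF s(1) ah(1) d1h] s(2) by simp
  also have "\<dots> = ?d1 \<odot> ide D \<boxplus> ?d1 \<odot> ng (\<sigma> \<odot> ?d1)" using dl[OF idD hn[OF sd] d1h] .
  also have "\<dots> = ?d1 \<boxplus> ng ?d1" using idr[OF d1h] cn[OF sd d1h] d1sd by simp
  also have "\<dots> = zr D Y" using an[OF d1h] .
  also have "\<dots> = i \<odot> zr D X" using c0'[OF ih(1) d1h] by simp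
  finally have "k \<odot> (b \<odot> s) = zr D X" using imono[OF hc[OF hc[OF s(1) bb(1)] kfh(1)] hz'[OF d1h kfh(1)]] by blast
  also have "\<dots> = k \<odot> zr D K" using c0'[OF kfh(1) d1h] by simp
  finally have bs: "b \<odot> s = zr D K" using kmono[OF hc[OF s(1) bb(1)] hz'[OF d1h bb(1)]] by blast
  have "b0' \<odot> ?m0 = b0' \<odot> (a \<odot> s)" using s(2) by simp
  also have "\<dots> = a0 \<odot> (b \<odot> s)" using assoc[OF s(1) ah(1) poh(2)] assoc[OF s(1) bb(1) poh(3)] poh(4) by simp
  also have "\<dots> = zr D P0" using bs c0'[OF poh(3) d1h] by simp
  finally have "b0' \<odot> ?m0 = zr D P0" .
  moreover have "b0' \<odot> ?m0 = b0' \<boxplus> ng (b0' \<odot> (\<sigma> \<odot> ?d1))"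
    using dl[OF idD hn[OF sd] poh(2)] idr[OF poh(2)] cn[OF sd poh(2)] by simp
  ultimately have "b0' = b0' \<odot> (\<sigma> \<odot> ?d1)" using sub_zero[OF poh(2) hc[OF sd poh(2)]] by simp
  then have psd1: "?\<psi> \<odot> ?d1 = b0'" using assoc[OF d1h sg(1) poh(2)] by simp
  have pf1: "(?\<psi> \<odot> \<phi>) \<odot> b0' = b0'" using assoc[OF poh(2) phi(1) psh] phi(2) psd1 by simp
  have "(?\<psi> \<odot> (i \<odot> k)) \<odot> b = a0 \<odot> b"
    using assoc[OF bb(1) ikh psh] d1a[symmetric] assoc[OF ah(1) d1h psh] psd1 poh(4) by simp
  then have "?\<psi> \<odot> (i \<odot> k) = a0" using cok_epi[OF confC[OF cb] hc[OF ikh psh] poh(3)] by blast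
  then have pf2: "(?\<psi> \<odot> \<phi>) \<odot> a0 = a0" using assoc[OF poh(3) phi(1) psh] phi(3) by simp
  have idP: "ide P0 \<in> H P0 P0" using hid[OF poh(1)] .
  have "?\<psi> \<odot> \<phi> = ide P0"
    using ex1_eq[OF poU[OF poh(2) poh(3) poh(4)], of "?\<psi> \<odot> \<phi>" "ide P0"] hc[OF phi(1) psh] pf1 pf2 idP
      idl[OF poh(2)] idl[OF poh(3)] by blast
  then have phiso: "is_iso C P0 Y \<phi>" using iso_intro[OF phi(1) psh _ pp] by blast
  obtain c0 W where c0c: "conf K a0 P0 c0 W" using ia0 unfolding inflation_def by blast
  have c0h: "c0 \<in> H P0 W" using confH[OF c0c] by blast
  have ccc: "conf K (i \<odot> k) Y (c0 \<odot> ?\<psi>) W"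
  proof (rule conf_iso[OF c0c ikh hc[OF psh c0h] iso_id[OF obL[OF ikh]] phiso iso_id[OF obR[OF c0h]]])
    show "(i \<odot> k) \<odot> ide K = \<phi> \<odot> a0" using idr[OF ikh] phi(3) by simp
    show "(c0 \<odot> ?\<psi>) \<odot> \<phi> = ide W \<odot> c0"
      using assoc[OF phi(1) psh c0h] \<open>?\<psi> \<odot> \<phi> = ide P0\<close> idr[OF c0h] idl[OF c0h] by simp
  qed
  have gik: "g \<odot> (i \<odot> k) = zr K Y'"
    using assoc[OF kfh(1) ih(1) gh] sq assoc[OF kfh(1) fh ih'(1)] kfh(2) c0'[OF ih'(1) kfh(1)] by simp
  have gc: "is_cokernel C K (i \<odot> k) Y g Y'"
    unfolding is_cokernel_def
  proof (intro conjI ikh gh gik allI ballI impI)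
    fix T t assume th: "t \<in> H Y T" and t0: "t \<odot> (i \<odot> k) = zr K T"
    have "(t \<odot> ?d1) \<odot> a = (t \<odot> (i \<odot> k)) \<odot> b"
      using assoc[OF ah(1) d1h th] d1a assoc[OF bb(1) ikh th] by simp
    also have "\<dots> = zr Cc T" using t0 z0c'[OF bb(1) th] by simp
    finally obtain s1 where s1: "s1 \<in> H Y' T" "s1 \<odot> ?h = t \<odot> ?d1"
      using cok_desc[OF confC[OF cha] hc[OF d1h th]] by blast
    have "s1 \<odot> g = t"
      using hs assoc[OF sg(1) hh s1(1)] s1(2) assoc[OF sg(1) d1h th] d1s idr[OF th] by simp
    then have ex: "s1 \<in> H Y' T \<and> s1 \<odot> g = t" using s1(1) by blast
    show "\<exists>!u. u \<in> H Y' T \<and> u \<odot> g = t"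
    proof (rule ex1I[of _ s1])
      show "s1 \<in> H Y' T \<and> s1 \<odot> g = t" using ex .
      fix y assume y: "y \<in> H Y' T \<and> y \<odot> g = t"
      have "y \<odot> ?h = s1 \<odot> ?h"
        using hd assoc[OF d1h gh] y ex by (metis hc)
      then show "y = s1" using cok_epi[OF confC[OF cha]] y ex by blast
    qed
  qed
  have "conf K (i \<odot> k) Y g Y'" using cok_transport[OF ccc gc] .
  then show ?thesis unfolding A_deflation_def using KA by blast
qed

end


theorem mainTheorem11:
  fixes C :: "('o, 'm, 'e) addcat_scheme" and conf :: "('o, 'm) confl" and \<A> :: "'o set"
  assumes "deflation_exact C conf"
    and "admissibly_deflation_percolating C conf \<A>"
    and "conf X i Y p Z" and "conf X' i' Y' p' Z"
    and "f \<in> Hom C X X'" and "g \<in> Hom C Y Y'"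
    and "cmp C g i = cmp C i' f" and "cmp C p' g = cmp C (idm C Z) p"
  shows "(A_inflation conf \<A> X f X' \<longrightarrow> A_inflation conf \<A> Y g Y') \<and>
         (A_deflation conf \<A> X f X' \<longrightarrow> A_deflation conf \<A> Y g Y')"
proof -
  interpret dex C conf by unfold_locales (rule assms(1))
  show ?thesis
  proof (intro conjI impI)
    assume "A_inflation conf \<A> X f X'"
    then obtain c A0 where "conf X f X' c A0" "A0 \<in> \<A>" unfolding A_inflation_def by blast
    then show "A_inflation conf \<A> Y g Y'" using part1[OF assms(2-8)] by blast
  next
    assume "A_deflation conf \<A> X f X'"
    then obtain K k where "conf K k X f X'" "K \<in> \<A>" unfolding A_deflation_def by blast
    then show "A_deflation conf \<A> Y g Y'" using part2[OF assms(2-8)] by blast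
  qed
qed

end
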